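(* Let $\mathcal P$ be a non-degenerate polar space of finite rank $n\ge2$ with no thin lines and defect $d=\mathrm{def}(\mathcal P)$, and suppose $\mathfrak N(\mathcal P)$ admits at least one maximal well ordered chain. Then $\mathrm{gr}(\mathcal P)\le 2n+d$ (which equals $d$ when $d$ is infinite).
   Context: A subspace of $\mathcal P$ is a set of points containing every line meeting it in $\ge2$ points; $\mathrm{gr}(\mathcal P)$ is the minimum size of a set of points whose span (smallest subspace containing it) is all of $\mathcal P$. A nice subspace is a subspace containing two mutually disjoint maximal singular subspaces; $\mathfrak N(\mathcal P)$ is the poset of nice subspaces under inclusion. $\mathrm{def}(\mathcal P)$ is the least upper bound of the lengths (cardinality minus one) of the well ordered chains of $\mathfrak N(\mathcal P)$. A maximal well ordered chain is one that is maximal among well ordered chains. *)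

theory Defs
  imports Main
begin

definition partial_linear_space :: "'a set \<Rightarrow> 'a set set \<Rightarrow> bool" where
  "partial_linear_space P L \<longleftrightarrow>
     (\<forall>l\<in>L. l \<subseteq> P \<and> (\<exists>x y. x \<in> l \<and> y \<in> l \<and> x \<noteq> y)) \<and>
     (\<forall>l\<in>L. \<forall>m\<in>L. \<forall>x y. x \<noteq> y \<and> x \<in> l \<and> y \<in> l \<and> x \<in> m \<and> y \<in> m \<longrightarrow> l = m)"

definition collinear :: "'a set set \<Rightarrow> 'a \<Rightarrow> 'a \<Rightarrow> bool" where
  "collinear L p q \<longleftrightarrow> p = q \<or> (\<exists>l\<in>L. p \<in> l \<and> q \<in> l)"

definition polar_space :: "'a set \<Rightarrow> 'a set set \<Rightarrow> bool" where
  "polar_space P L \<longleftrightarrow> partial_linear_space P L \<and>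
     (\<forall>p\<in>P. \<forall>l\<in>L. p \<notin> l \<longrightarrow>
        (\<exists>!q. q \<in> l \<and> collinear L p q) \<or> (\<forall>q\<in>l. collinear L p q))"

definition nondegenerate :: "'a set \<Rightarrow> 'a set set \<Rightarrow> bool" where
  "nondegenerate P L \<longleftrightarrow> \<not> (\<exists>p\<in>P. \<forall>q\<in>P. collinear L p q)"

definition no_thin_lines :: "'a set set \<Rightarrow> bool" where
  "no_thin_lines L \<longleftrightarrow> (\<forall>l\<in>L. infinite l \<or> card l \<ge> 3)"

definition subspace :: "'a set \<Rightarrow> 'a set set \<Rightarrow> 'a set \<Rightarrow> bool" where
  "subspace P L S \<longleftrightarrow> S \<subseteq> P \<and>
     (\<forall>l\<in>L. (\<exists>x y. x \<noteq> y \<and> x \<in> l \<and> y \<in> l \<and> x \<in> S \<and> y \<in> S) \<longrightarrow> l \<subseteq> S)"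

definition singular_subspace :: "'a set \<Rightarrow> 'a set set \<Rightarrow> 'a set \<Rightarrow> bool" where
  "singular_subspace P L S \<longleftrightarrow> subspace P L S \<and> (\<forall>p\<in>S. \<forall>q\<in>S. collinear L p q)"

definition maximal_singular_subspace :: "'a set \<Rightarrow> 'a set set \<Rightarrow> 'a set \<Rightarrow> bool" where
  "maximal_singular_subspace P L M \<longleftrightarrow> singular_subspace P L M \<and>
     (\<forall>S. singular_subspace P L S \<and> M \<subseteq> S \<longrightarrow> S = M)"

definition span :: "'a set \<Rightarrow> 'a set set \<Rightarrow> 'a set \<Rightarrow> 'a set" where
  "span P L X = \<Inter> {S. subspace P L S \<and> X \<subseteq> S}"

definition generating_set :: "'a set \<Rightarrow> 'a set set \<Rightarrow> 'a set \<Rightarrow> bool" where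
  "generating_set P L X \<longleftrightarrow> X \<subseteq> P \<and> span P L X = P"

definition singular_chain :: "'a set \<Rightarrow> 'a set set \<Rightarrow> nat \<Rightarrow> bool" where
  "singular_chain P L k \<longleftrightarrow> (\<exists>S :: nat \<Rightarrow> 'a set.
     (\<forall>i<k. singular_subspace P L (S i) \<and> S i \<noteq> {}) \<and>
     (\<forall>i. Suc i < k \<longrightarrow> S i \<subset> S (Suc i)))"

text \<open>Finite rank n: the longest chains of nonempty singular subspaces have length n
  (so maximal singular subspaces are projective spaces of dimension n-1).\<close>
definition has_rank :: "'a set \<Rightarrow> 'a set set \<Rightarrow> nat \<Rightarrow> bool" where
  "has_rank P L n \<longleftrightarrow> singular_chain P L n \<and> \<not> singular_chain P L (Suc n)"

definition nice_subspace :: "'a set \<Rightarrow> 'a set set \<Rightarrow> 'a set \<Rightarrow> bool" where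
  "nice_subspace P L S \<longleftrightarrow> subspace P L S \<and>
     (\<exists>M1 M2. maximal_singular_subspace P L M1 \<and> maximal_singular_subspace P L M2 \<and>
        M1 \<subseteq> S \<and> M2 \<subseteq> S \<and> M1 \<inter> M2 = {})"

definition wo_chain :: "'a set \<Rightarrow> 'a set set \<Rightarrow> 'a set set \<Rightarrow> bool" where
  "wo_chain P L C \<longleftrightarrow> (\<forall>S\<in>C. nice_subspace P L S) \<and>
     (\<forall>A\<in>C. \<forall>B\<in>C. A \<subseteq> B \<or> B \<subseteq> A) \<and>
     (\<forall>D. D \<subseteq> C \<and> D \<noteq> {} \<longrightarrow> (\<exists>m\<in>D. \<forall>A\<in>D. m \<subseteq> A))"

definition maximal_wo_chain :: "'a set \<Rightarrow> 'a set set \<Rightarrow> 'a set set \<Rightarrow> bool" where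
  "maximal_wo_chain P L C \<longleftrightarrow> wo_chain P L C \<and>
     (\<forall>C'. wo_chain P L C' \<and> C \<subseteq> C' \<longrightarrow> C' = C)"

text \<open>def(P) = d is a natural number: d is the largest length (cardinality minus one)
  of a well ordered chain of nice subspaces.\<close>
definition defect_is_nat :: "'a set \<Rightarrow> 'a set set \<Rightarrow> nat \<Rightarrow> bool" where
  "defect_is_nat P L d \<longleftrightarrow>
     (\<forall>C. wo_chain P L C \<longrightarrow> finite C \<and> card C \<le> Suc d) \<and>
     (\<exists>C. wo_chain P L C \<and> finite C \<and> card C = Suc d)"

definition defect_infinite :: "'a set \<Rightarrow> 'a set set \<Rightarrow> bool" where
  "defect_infinite P L \<longleftrightarrow>
     (\<forall>k::nat. \<exists>C. wo_chain P L C \<and> (infinite C \<or> card C > Suc k))"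

text \<open>For infinite def(P), the cardinal |X| is at most def(P), the least upper bound of the
  cardinalities of the well ordered chains (cardinality minus one agrees with cardinality
  for infinite cardinals, and the supremum is infinite).\<close>
definition card_le_defect :: "'a set \<Rightarrow> 'a set set \<Rightarrow> 'a set \<Rightarrow> bool" where
  "card_le_defect P L X \<longleftrightarrow>
     (\<forall>B :: 'a set set set. (\<forall>C. wo_chain P L C \<longrightarrow> (card_of C, card_of B) \<in> ordLeq)
        \<longrightarrow> (card_of X, card_of B) \<in> ordLeq)"

end

theory Submission
  imports Defs
begin

lemma span_sup: "X \<subseteq> span P L X"
  unfolding span_def by auto

lemma span_least: "subspace P L S \<Longrightarrow> X \<subseteq> S \<Longrightarrow> span P L X \<subseteq> S"
  unfolding span_def by auto

lemma span_mono: "X \<subseteq> Y \<Longrightarrow> span P L X \<subseteq> span P L Y"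
  unfolding span_def by auto

lemma subspace_P: "\<forall>l\<in>L. l \<subseteq> P \<Longrightarrow> subspace P L P"
  unfolding subspace_def by auto

lemma span_subspace:
  assumes "\<forall>l\<in>L. l \<subseteq> P" "X \<subseteq> P"
  shows "subspace P L (span P L X)"
proof -
  have sP: "subspace P L P" using assms subspace_P by blast
  have "span P L X \<subseteq> P" using span_least[OF sP assms(2)] .
  moreover have "\<forall>l\<in>L. (\<exists>x y. x \<noteq> y \<and> x \<in> l \<and> y \<in> l \<and> x \<in> span P L X \<and> y \<in> span P L X) \<longrightarrow> l \<subseteq> span P L X"
  proof (intro ballI impI)
    fix l assume l: "l \<in> L" and "\<exists>x y. x \<noteq> y \<and> x \<in> l \<and> y \<in> l \<and> x \<in> span P L X \<and> y \<in> span P L X"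
    then obtain x y where xy: "x \<noteq> y" "x \<in> l" "y \<in> l" "x \<in> span P L X" "y \<in> span P L X" by blast
    have "l \<subseteq> S" if S: "subspace P L S" "X \<subseteq> S" for S
    proof -
      have "x \<in> S" "y \<in> S" using xy(4,5) S unfolding span_def by auto
      then show ?thesis using S(1) l xy(1-3) unfolding subspace_def by blast
    qed
    then show "l \<subseteq> span P L X" unfolding span_def by blast
  qed
  ultimately show ?thesis unfolding subspace_def by blast
qed

lemma nice_up:
  assumes "nice_subspace P L S" "S \<subseteq> W" "subspace P L W"
  shows "nice_subspace P L W"
  using assms unfolding nice_subspace_def by blast

lemma wo_insert:
  assumes "wo_chain P L C" "nice_subspace P L T" "\<forall>A\<in>C. A \<subseteq> T \<or> T \<subseteq> A"
  shows "wo_chain P L (insert T C)"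
proof -
  have wo: "\<forall>D. D \<subseteq> insert T C \<and> D \<noteq> {} \<longrightarrow> (\<exists>m\<in>D. \<forall>A\<in>D. m \<subseteq> A)"
  proof (intro allI impI)
  fix D assume DD: "D \<subseteq> insert T C \<and> D \<noteq> {}"
  then have D: "D \<subseteq> insert T C" "D \<noteq> {}" by auto
  show "\<exists>m\<in>D. \<forall>A\<in>D. m \<subseteq> A"
  proof (cases "D - {T} = {}")
    case True
    then have "D = {T}" using D by blast
    then show ?thesis by blast
  next
    case False
    then obtain m where m: "m \<in> D - {T}" "\<forall>A\<in>D - {T}. m \<subseteq> A"
      using assms(1) D unfolding wo_chain_def by (metis Diff_subset_conv insert_is_Un sup_commute)
    have mC: "m \<in> C" using m D by blast
    show ?thesis
    proof (cases "T \<in> D \<and> T \<subseteq> m")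
      case True
      then show ?thesis using m by blast
    next
      case False
      then have "T \<in> D \<longrightarrow> m \<subseteq> T" using assms(3) mC by blast
      then show ?thesis using m by blast
    qed
  qed
  qed
  have "\<forall>S\<in>insert T C. nice_subspace P L S" using assms(1,2) unfolding wo_chain_def by blast
  moreover have "\<forall>A\<in>insert T C. \<forall>B\<in>insert T C. A \<subseteq> B \<or> B \<subseteq> A"
    using assms(1,3) unfolding wo_chain_def by blast
  ultimately show ?thesis using wo unfolding wo_chain_def by simp
qed

lemma max_insert:
  assumes "maximal_wo_chain P L C" "nice_subspace P L T" "\<forall>A\<in>C. A \<subseteq> T \<or> T \<subseteq> A"
  shows "T \<in> C"
proof -
  have "wo_chain P L (insert T C)" using wo_insert assms maximal_wo_chain_def by metis
  then have "insert T C = C" using assms(1) unfolding maximal_wo_chain_def by blast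
  then show ?thesis by blast
qed

lemma rank_span:
  assumes lines: "\<forall>l\<in>L. l \<subseteq> P" and M: "singular_subspace P L M"
    and nc: "\<not> singular_chain P L (Suc n)"
  shows "\<exists>F. finite F \<and> F \<subseteq> M \<and> card F \<le> n \<and> span P L F = M"
proof -
  define Q where "Q xs \<longleftrightarrow> set xs \<subseteq> M \<and> (\<forall>i<length xs. xs!i \<notin> span P L (set (take i xs)))" for xs
  have MP: "M \<subseteq> P" and Msub: "subspace P L M" using M unfolding singular_subspace_def subspace_def by auto
  have sing: "singular_subspace P L (span P L Y)" if "Y \<subseteq> M" for Y
  proof -
    have "span P L Y \<subseteq> M" using span_least[OF Msub that] .
    then show ?thesis using span_subspace[OF lines] that MP M unfolding singular_subspace_def by blast
  qed
  have bound: "length xs \<le> n" if "Q xs" for xs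
  proof (rule ccontr)
    assume "\<not> length xs \<le> n"
    then have len: "Suc n \<le> length xs" by simp
    define S where "S i = span P L (set (take (Suc i) xs))" for i
    have "singular_subspace P L (S i) \<and> S i \<noteq> {}" if "i < Suc n" for i
    proof -
      have a: "set (take (Suc i) xs) \<subseteq> M" using \<open>Q xs\<close> unfolding Q_def by (meson set_take_subset subset_trans)
      have "xs ! i \<in> set (take (Suc i) xs)" using that len
        by (simp add: take_Suc_conv_app_nth)
      then have "xs ! i \<in> S i" unfolding S_def using span_sup by (metis subsetD)
      then show ?thesis using sing[OF a] unfolding S_def by blast
    qed
    moreover have "S i \<subset> S (Suc i)" if "Suc i < Suc n" for i
    proof -
      have 1: "S i \<subseteq> S (Suc i)" unfolding S_def by (intro span_mono set_take_subset_set_take) simp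
      have "xs ! Suc i \<in> set (take (Suc (Suc i)) xs)" using that len
        by (simp add: take_Suc_conv_app_nth)
      then have 2: "xs ! Suc i \<in> S (Suc i)" unfolding S_def using span_sup by (metis subsetD)
      have "Suc i < length xs" using that len by simp
      moreover have qq: "\<forall>i<length xs. xs ! i \<notin> span P L (set (take i xs))" using \<open>Q xs\<close> Q_def by simp
      ultimately have 3: "xs ! Suc i \<notin> S i" unfolding S_def by simp
      from 1 2 3 show ?thesis by blast
    qed
    ultimately have "(\<forall>i<Suc n. singular_subspace P L (S i) \<and> S i \<noteq> {}) \<and>
     (\<forall>i. Suc i < Suc n \<longrightarrow> S i \<subset> S (Suc i))" by blast
    then have "singular_chain P L (Suc n)" unfolding singular_chain_def by (intro exI[of _ S])
    then show False using nc by blast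
  qed
  have "Q []" unfolding Q_def by simp
  have "\<exists>x. (\<exists>xs. Q xs \<and> length xs = x) \<and> (\<forall>y. (\<exists>xs. Q xs \<and> length xs = y) \<longrightarrow> y \<le> x)"
    apply (rule Nat.ex_has_greatest_nat[where P="\<lambda>k. \<exists>xs. Q xs \<and> length xs = k" and k=0 and b=n])
    using \<open>Q []\<close> bound by auto
  then obtain k xs where xs: "Q xs" "length xs = k" and great0: "\<forall>y. (\<exists>xs. Q xs \<and> length xs = y) \<longrightarrow> y \<le> k"
    by blast
  have great: "length ys \<le> k" if "Q ys" for ys using great0 that by blast
  have xsM: "set xs \<subseteq> M" using xs(1) Q_def by simp
  have xsQ: "\<forall>i<length xs. xs ! i \<notin> span P L (set (take i xs))" using xs(1) Q_def by simp
  have "span P L (set xs) = M"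
  proof (rule ccontr)
    assume ne: "span P L (set xs) \<noteq> M"
    have "span P L (set xs) \<subseteq> M" using span_least[OF Msub xsM] .
    then obtain p where p: "p \<in> M" "p \<notin> span P L (set xs)" using ne by blast
    have "Q (xs @ [p])" unfolding Q_def
    proof (intro conjI allI impI)
      show "set (xs @ [p]) \<subseteq> M" using xsM p by simp
    next
      fix i assume i: "i < length (xs @ [p])"
      show "(xs @ [p]) ! i \<notin> span P L (set (take i (xs @ [p])))"
      proof (cases "i < length xs")
        case True
        then show ?thesis using xsQ by (simp add: nth_append)
      next
        case False
        then have "i = length xs" using i by simp
        then show ?thesis using p by simp
      qed
    qed
    then have "length (xs @ [p]) \<le> k" by (rule great)
    then show False using xs(2) by simp
  qed
  moreover have "card (set xs) \<le> n" using bound[OF xs(1)] card_length le_trans by blast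
  ultimately show ?thesis using xsM by (intro exI[of _ "set xs"]) simp
qed


lemma main_construction:
  assumes lines: "\<forall>l\<in>L. l \<subseteq> P" and nc: "\<not> singular_chain P L (Suc n)"
    and N: "nice_subspace P L N" and Cm: "maximal_wo_chain P L C"
  shows "\<exists>S0 F0 f. S0 \<in> C \<and> finite F0 \<and> card F0 \<le> 2*n \<and> generating_set P L (F0 \<union> f ` (C - {S0}))"
proof -
  have sP: "subspace P L P" using lines by (rule subspace_P)
  have woC: "wo_chain P L C" using Cm unfolding maximal_wo_chain_def by blast
  have Cnice: "\<forall>S\<in>C. nice_subspace P L S" using woC unfolding wo_chain_def by blast
  have chain: "\<forall>A\<in>C. \<forall>B\<in>C. A \<subseteq> B \<or> B \<subseteq> A" using woC unfolding wo_chain_def by blast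
  have wf: "\<forall>D. D \<subseteq> C \<and> D \<noteq> {} \<longrightarrow> (\<exists>m\<in>D. \<forall>A\<in>D. m \<subseteq> A)" using woC unfolding wo_chain_def by blast
  have subsp: "subspace P L S" if "S \<in> C" for S using Cnice that unfolding nice_subspace_def by blast
  have CP: "S \<subseteq> P" if "S \<in> C" for S using subsp[OF that] unfolding subspace_def by blast
  have "subspace P L N" using N unfolding nice_subspace_def by (elim conjE)
  then have "N \<subseteq> P" unfolding subspace_def by (elim conjE)
  then have Pnice: "nice_subspace P L P" by (rule nice_up[OF N _ sP])
  have "\<forall>A\<in>C. A \<subseteq> P \<or> P \<subseteq> A" using CP by blast
  then have PC: "P \<in> C" by (rule max_insert[OF Cm Pnice])
  have "C \<subseteq> C \<and> C \<noteq> {}" using PC by blast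
  then obtain S0 where S0: "S0 \<in> C" "\<forall>A\<in>C. S0 \<subseteq> A" using wf[rule_format, of C] by blast
  have S0sub: "subspace P L S0" using subsp[OF S0(1)] .
  have "nice_subspace P L S0" using Cnice S0(1) by blast
  then obtain M1 M2 where M: "maximal_singular_subspace P L M1" "maximal_singular_subspace P L M2"
    "M1 \<subseteq> S0" "M2 \<subseteq> S0" "M1 \<inter> M2 = {}"
    unfolding nice_subspace_def by (elim conjE exE) blast
  have sg1: "singular_subspace P L M1" using M(1) unfolding maximal_singular_subspace_def by (elim conjE)
  have sg2: "singular_subspace P L M2" using M(2) unfolding maximal_singular_subspace_def by (elim conjE)
  obtain F1 where F1: "finite F1" "F1 \<subseteq> M1" "card F1 \<le> n" "span P L F1 = M1"
    using rank_span[OF lines sg1 nc] by (elim exE conjE)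
  obtain F2 where F2: "finite F2" "F2 \<subseteq> M2" "card F2 \<le> n" "span P L F2 = M2"
    using rank_span[OF lines sg2 nc] by (elim exE conjE)
  define F0 where "F0 = F1 \<union> F2"
  have F0fin: "finite F0" using F1 F2 F0_def by blast
  have F0card: "card F0 \<le> 2*n"
  proof -
    have "card F0 \<le> card F1 + card F2" unfolding F0_def by (rule card_Un_le)
    then show ?thesis using F1(3) F2(3) by simp
  qed
  have F0S0: "F0 \<subseteq> S0" using F1(2) F2(2) M(3,4) F0_def by blast
  have F0P: "F0 \<subseteq> P" using F0S0 CP[OF S0(1)] by blast
  have spF0: "span P L F0 = S0"
  proof -
    have Tsub: "subspace P L (span P L F0)" using span_subspace[OF lines F0P] .
    have TS0: "span P L F0 \<subseteq> S0" using span_least[OF S0sub F0S0] .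
    have "M1 \<subseteq> span P L F0" using span_mono[of F1 F0 P L] F1(4) F0_def by blast
    moreover have "M2 \<subseteq> span P L F0" using span_mono[of F2 F0 P L] F2(4) F0_def by blast
    ultimately have "nice_subspace P L (span P L F0)" using Tsub M unfolding nice_subspace_def by blast
    moreover have "\<forall>A\<in>C. A \<subseteq> span P L F0 \<or> span P L F0 \<subseteq> A" using TS0 S0(2) by blast
    ultimately have "span P L F0 \<in> C" using max_insert[OF Cm] by blast
    then have "S0 \<subseteq> span P L F0" using S0(2) by blast
    then show ?thesis using TS0 by blast
  qed
  define U where "U S = \<Union>{A\<in>C. A \<subset> S}" for S
  have key: "\<exists>p. S = span P L (insert p (U S))" if S: "S \<in> C" "S \<noteq> S0" for S
  proof -
    have S0S: "S0 \<subset> S" using S0(2) S by blast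
    have Ssub: "subspace P L S" using subsp[OF S(1)] .
    have US: "U S \<subseteq> S" unfolding U_def by blast
    have UP: "U S \<subseteq> P" using US CP[OF S(1)] by blast
    have S0U: "S0 \<subseteq> U S" unfolding U_def using S0S S0(1) by blast
    have cmp: "A \<subseteq> U S \<or> S \<subseteq> A" if "A \<in> C" for A
    proof (cases "A \<subset> S")
      case True then show ?thesis unfolding U_def using that by blast
    next
      case False then show ?thesis using chain that S(1) by blast
    qed
    have niceW: "nice_subspace P L W" if "U S \<subseteq> W" "subspace P L W" for W
      using nice_up[OF Cnice[rule_format, OF S0(1)]] S0U that by blast
    show ?thesis
    proof (cases "span P L (U S) = S")
      case True
      obtain p where p: "p \<in> S" using S0S by blast
      have "span P L (insert p (U S)) \<subseteq> S" using span_least[OF Ssub] p US by blast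
      moreover have "S \<subseteq> span P L (insert p (U S))" using True span_mono[of "U S" "insert p (U S)" P L] by blast
      ultimately show ?thesis by blast
    next
      case False
      let ?V = "span P L (U S)"
      have Vsub: "subspace P L ?V" using span_subspace[OF lines UP] .
      have VS: "?V \<subseteq> S" using span_least[OF Ssub US] .
      have UV: "U S \<subseteq> ?V" by (rule span_sup)
      have "nice_subspace P L ?V" using niceW[OF UV Vsub] .
      moreover have "\<forall>A\<in>C. A \<subseteq> ?V \<or> ?V \<subseteq> A" using cmp UV VS by blast
      ultimately have VC: "?V \<in> C" using max_insert[OF Cm] by blast
      have "?V \<subset> S" using VS False by blast
      then have "?V \<subseteq> U S" using VC unfolding U_def by blast
      then have UeqV: "U S = ?V" using UV by blast
      then have "U S \<noteq> S" using False by simp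
      then obtain p where p: "p \<in> S" "p \<notin> U S" using US by blast
      let ?T = "span P L (insert p (U S))"
      have ipP: "insert p (U S) \<subseteq> P" using p UP CP[OF S(1)] by blast
      have Tsub: "subspace P L ?T" using span_subspace[OF lines ipP] .
      have TS: "?T \<subseteq> S" using span_least[OF Ssub] p US by blast
      have UT: "U S \<subseteq> ?T" using span_sup[of "insert p (U S)" P L] by blast
      have pT: "p \<in> ?T" using span_sup[of "insert p (U S)" P L] by blast
      have "nice_subspace P L ?T" using niceW[OF UT Tsub] .
      moreover have "\<forall>A\<in>C. A \<subseteq> ?T \<or> ?T \<subseteq> A" using cmp UT TS by blast
      ultimately have TC: "?T \<in> C" using max_insert[OF Cm] by blast
      have "?T = S"
      proof (rule ccontr)
        assume "?T \<noteq> S"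
        then have "?T \<subset> S" using TS by blast
        then have "?T \<subseteq> U S" using TC unfolding U_def by blast
        then show False using pT p by blast
      qed
      then show ?thesis by metis
    qed
  qed
  define f where "f S = (SOME p. S = span P L (insert p (U S)))" for S
  have fS: "S = span P L (insert (f S) (U S))" if "S \<in> C" "S \<noteq> S0" for S
    unfolding f_def using someI_ex[OF key[OF that]] .
  define X where "X = F0 \<union> f ` (C - {S0})"
  have XP: "X \<subseteq> P"
  proof -
    have "f S \<in> P" if "S \<in> C - {S0}" for S
    proof -
      have mem: "f S \<in> span P L (insert (f S) (U S))" by (rule subsetD[OF span_sup]) simp
      have SC: "S \<in> C" "S \<noteq> S0" using that by auto
      have e: "S = span P L (insert (f S) (U S))" by (rule fS[OF SC])
      from mem have "f S \<in> S" by (simp only: e[symmetric])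
      then show ?thesis using that CP[of S] by blast
    qed
    then show ?thesis using F0P X_def by blast
  qed
  have spXsub: "subspace P L (span P L X)" using span_subspace[OF lines XP] .
  have cover: "\<forall>S\<in>C. S \<subseteq> span P L X"
  proof (rule ccontr)
    assume "\<not> (\<forall>S\<in>C. S \<subseteq> span P L X)"
    then have Dne: "{S\<in>C. \<not> S \<subseteq> span P L X} \<subseteq> C \<and> {S\<in>C. \<not> S \<subseteq> span P L X} \<noteq> {}" by blast
    then obtain m where m: "m \<in> {S\<in>C. \<not> S \<subseteq> span P L X}" "\<forall>A\<in>{S\<in>C. \<not> S \<subseteq> span P L X}. m \<subseteq> A"
      using wf[rule_format, OF Dne] by (elim bexE)
    have mC: "m \<in> C" and mn: "\<not> m \<subseteq> span P L X" using m(1) by auto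
    show False
    proof (cases "m = S0")
      case True
      have "F0 \<subseteq> X" unfolding X_def by (rule Un_upper1)
      then have "span P L F0 \<subseteq> span P L X" by (rule span_mono)
      then have "S0 \<subseteq> span P L X" by (simp only: spF0)
      then show False using True mn by simp
    next
      case False
      have "U m \<subseteq> span P L X"
      proof
        fix x assume "x \<in> U m"
        then obtain A where A: "A \<in> C" "A \<subset> m" "x \<in> A" unfolding U_def by blast
        have "A \<subseteq> span P L X"
        proof (rule ccontr)
          assume "\<not> A \<subseteq> span P L X"
          then have "m \<subseteq> A" using m(2) A(1) by blast
          then show False using A(2) by blast
        qed
        then show "x \<in> span P L X" using A(3) by (rule subsetD)
      qed
      moreover have "f m \<in> X" using mC False unfolding X_def by blast
      then have "f m \<in> span P L X" by (rule subsetD[OF span_sup])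
      ultimately have "insert (f m) (U m) \<subseteq> span P L X" by simp
      then have "span P L (insert (f m) (U m)) \<subseteq> span P L X" by (rule span_least[OF spXsub])
      then have "m \<subseteq> span P L X" by (simp only: fS[OF mC False, symmetric])
      then show False using mn by (rule notE[rotated])
    qed
  qed
  have "span P L X \<subseteq> P" by (rule span_least[OF sP XP])
  moreover have "P \<subseteq> span P L X" using cover PC by (rule bspec)
  ultimately have "span P L X = P" by (rule subset_antisym)
  then have "generating_set P L X" using XP unfolding generating_set_def by (intro conjI)
  then have "generating_set P L (F0 \<union> f ` (C - {S0}))" by (simp only: X_def)
  then show ?thesis using S0(1) F0fin F0card by blast
qed


theorem mainTheorem16:
  fixes P :: "'a set" and L :: "'a set set" and n :: nat
  assumes "polar_space P L"
    and "nondegenerate P L"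
    and "has_rank P L n"
    and "n \<ge> 2"
    and "no_thin_lines L"
    and "\<exists>C. maximal_wo_chain P L C"
  shows "(\<forall>d. defect_is_nat P L d \<longrightarrow>
            (\<exists>X. generating_set P L X \<and> finite X \<and> card X \<le> 2 * n + d))
       \<and> (defect_infinite P L \<longrightarrow>
            (\<exists>X. generating_set P L X \<and> card_le_defect P L X))"
proof -
  have "partial_linear_space P L" using assms(1) unfolding polar_space_def by (elim conjE)
  then have lines: "\<forall>l\<in>L. l \<subseteq> P" unfolding partial_linear_space_def by blast
  have nc: "\<not> singular_chain P L (Suc n)" using assms(3) unfolding has_rank_def by (elim conjE)
  obtain C where Cm: "maximal_wo_chain P L C" using assms(6) by (elim exE)
  have woC: "wo_chain P L C" using Cm unfolding maximal_wo_chain_def by (elim conjE)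
  have nice_of: "\<exists>N. nice_subspace P L N" if w: "wo_chain P L C'" and ne: "C' \<noteq> {}" for C'
  proof -
    obtain N where "N \<in> C'" using ne by blast
    moreover have "\<forall>S\<in>C'. nice_subspace P L S" using w unfolding wo_chain_def by (elim conjE)
    ultimately show ?thesis by blast
  qed
  have part1: "\<exists>X. generating_set P L X \<and> finite X \<and> card X \<le> 2 * n + d"
    if dn: "defect_is_nat P L d" for d
  proof -
    have bnd: "\<forall>C. wo_chain P L C \<longrightarrow> finite C \<and> card C \<le> Suc d"
      using dn unfolding defect_is_nat_def by (elim conjE)
    have "\<exists>C. wo_chain P L C \<and> finite C \<and> card C = Suc d"
      using dn unfolding defect_is_nat_def by (elim conjE)
    then obtain C' where C': "wo_chain P L C'" "finite C'" "card C' = Suc d"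
      by (elim exE conjE)
    have "C' \<noteq> {}" using C' by auto
    then obtain N where N: "nice_subspace P L N" using nice_of C'(1) by blast
    obtain S0 F0 f where M: "S0 \<in> C" "finite F0" "card F0 \<le> 2*n"
      "generating_set P L (F0 \<union> f ` (C - {S0}))"
      using main_construction[OF lines nc N Cm] by (elim exE conjE)
    have fcC: "finite C \<and> card C \<le> Suc d" using bnd woC by blast
    have fC: "finite C" using fcC by (rule conjunct1)
    have cC: "card C \<le> Suc d" using fcC by (rule conjunct2)
    have fD: "finite (C - {S0})" using fC by (rule finite_Diff)
    have c0: "card (f ` (C - {S0})) \<le> card (C - {S0})" using fD by (rule card_image_le)
    have "card (C - {S0}) = card C - 1" using M(1) fC by (simp add: card_Diff_singleton)
    then have c1: "card (f ` (C - {S0})) \<le> d" using c0 cC by linarith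
    have "card (F0 \<union> f ` (C - {S0})) \<le> card F0 + card (f ` (C - {S0}))" by (rule card_Un_le)
    then have "card (F0 \<union> f ` (C - {S0})) \<le> 2 * n + d" using c1 M(3) by simp
    moreover have "finite (F0 \<union> f ` (C - {S0}))" using M(2) fC by simp
    ultimately show ?thesis using M(4) by blast
  qed
  have part2: "\<exists>X. generating_set P L X \<and> card_le_defect P L X" if di: "defect_infinite P L"
  proof -
    have "\<exists>C. wo_chain P L C \<and> (infinite C \<or> card C > Suc 0)"
      using di[unfolded defect_infinite_def, rule_format, of 0] .
    then obtain C' where C': "wo_chain P L C'" "infinite C' \<or> card C' > Suc 0"
      by (elim exE conjE)
    have "C' \<noteq> {}" using C' by auto
    then obtain N where N: "nice_subspace P L N" using nice_of C'(1) by blast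
    obtain S0 F0 f where M: "S0 \<in> C" "finite F0" "card F0 \<le> 2*n"
      "generating_set P L (F0 \<union> f ` (C - {S0}))"
      using main_construction[OF lines nc N Cm] by (elim exE conjE)
    have "card_le_defect P L (F0 \<union> f ` (C - {S0}))"
      unfolding card_le_defect_def
    proof (intro allI impI)
      fix B :: "'a set set set"
      assume hB: "\<forall>C. wo_chain P L C \<longrightarrow> (card_of C, card_of B) \<in> ordLeq"
      have infB: "infinite B"
      proof
        assume fB: "finite B"
        have "\<exists>C. wo_chain P L C \<and> (infinite C \<or> card C > Suc (card B))"
          using di[unfolded defect_infinite_def, rule_format, of "card B"] .
        then obtain C'' where C'': "wo_chain P L C''" "infinite C'' \<or> card C'' > Suc (card B)"
          by (elim exE conjE)
        have le: "(card_of C'', card_of B) \<in> ordLeq" using hB[rule_format, OF C''(1)] .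
        have fC'': "finite C''" using card_of_ordLeq_finite[OF le fB] .
        obtain g where g: "inj_on g C''" "g ` C'' \<subseteq> B" using le[folded card_of_ordLeq] by (elim exE conjE)
        have "card C'' \<le> card B" using card_inj_on_le[OF g fB] .
        then show False using C''(2) fC'' by simp
      qed
      have "(card_of (f ` (C - {S0})), card_of (C - {S0})) \<in> ordLeq" by (rule card_of_image)
      moreover have "(card_of (C - {S0}), card_of C) \<in> ordLeq" by (rule card_of_mono1) blast
      moreover have "(card_of C, card_of B) \<in> ordLeq" using hB[rule_format, OF woC] .
      ultimately have i1: "(card_of (f ` (C - {S0})), card_of B) \<in> ordLeq"
        using ordLeq_transitive by metis
      have "(card_of F0, card_of B) \<in> ordLess"
        by (rule finite_ordLess_infinite[OF card_of_Well_order card_of_Well_order])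
           (simp_all add: Field_card_of M(2) infB)
      then have i2: "(card_of F0, card_of B) \<in> ordLeq" by (rule ordLess_imp_ordLeq)
      show "(card_of (F0 \<union> f ` (C - {S0})), card_of B) \<in> ordLeq"
        by (rule card_of_Un_ordLeq_infinite_Field[OF _ i2 i1 card_of_Card_order])
           (simp add: Field_card_of infB)
    qed
    then show ?thesis using M(4) by blast
  qed
  show ?thesis using part1 part2 by blast
qed

end
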